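(* Let $n,m$ be positive integers and $\mathbf a,\mathbf b\in\mathbb N^n$ with $a_1+\cdots+a_i\ge b_1+\cdots+b_i$ for all $i$. There is a bijection between the set of plane partitions of skew shape $\theta(\mathbf a,\mathbf b)$ with all entries in $\{0,1,\dots,m\}$ and the set of integral points (integer-valued flows) of $\mathcal F_{G(n,m)}(\mathbf a,\mathbf b)$.
   Context: $\theta(\mathbf a,\mathbf b)=\lambda/\mu$ where $\lambda=(a_1+\cdots+a_n,\ldots,a_1+a_2,a_1)$ and $\mu=(b_1+\cdots+b_n,\ldots,b_1+b_2,b_1)$ (the dominance hypothesis ensures $\mu\subseteq\lambda$). A plane partition of skew shape $\lambda/\mu$ is a filling of the cells $(i,j)$, $\mu_i<j\le\lambda_i$, by nonnegative integers that weakly decrease along each row (left to right) and down each column. $G(n,m)$ is the directed graph with vertex set $\{(i,j):1\le i\le n,\ 0\le j\le m\}\cup\{s\}$ and edges $((i,j),(i,j+1))$ for $1\le i\le n$, $0\le j\le m-1$; $((i,j),(i+1,j))$ for $1\le i\le n-1$, $0\le j\le m$; and $((n,j),s)$ for $0\le j\le m$. $\mathcal F_{G(n,m)}(\mathbf a,\mathbf b)$ is the set of nonnegative real edge weightings $f$ such that at each vertex, outflow minus inflow equals its netflow: $a_i$ at $(i,0)$, $-b_i$ at $(i,m)$, $-\sum_i a_i+\sum_i b_i$ at $s$, and $0$ elsewhere. *)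

theory Defs
  imports Complex_Main
begin

text \<open>Vectors a, b in N^n are functions nat => nat indexed by 1..n.\<close>

definition shape_part :: "(nat \<Rightarrow> nat) \<Rightarrow> nat \<Rightarrow> nat \<Rightarrow> nat" where
  "shape_part a n i = (\<Sum>k = 1..(n + 1 - i). a k)"

definition skew_cells :: "(nat \<Rightarrow> nat) \<Rightarrow> (nat \<Rightarrow> nat) \<Rightarrow> nat \<Rightarrow> (nat \<times> nat) set" where
  "skew_cells a b n = {(i, j). 1 \<le> i \<and> i \<le> n \<and> shape_part b n i < j \<and> j \<le> shape_part a n i}"

definition plane_partitions_bounded ::
  "(nat \<Rightarrow> nat) \<Rightarrow> (nat \<Rightarrow> nat) \<Rightarrow> nat \<Rightarrow> nat \<Rightarrow> (nat \<times> nat \<Rightarrow> nat) set" where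
  "plane_partitions_bounded a b n m =
     {P. (\<forall>c. c \<notin> skew_cells a b n \<longrightarrow> P c = 0)
       \<and> (\<forall>c \<in> skew_cells a b n. P c \<le> m)
       \<and> (\<forall>i j. (i, j) \<in> skew_cells a b n \<and> (i, Suc j) \<in> skew_cells a b n \<longrightarrow> P (i, Suc j) \<le> P (i, j))
       \<and> (\<forall>i j. (i, j) \<in> skew_cells a b n \<and> (Suc i, j) \<in> skew_cells a b n \<longrightarrow> P (Suc i, j) \<le> P (i, j))}"

datatype gvert = Node nat nat | Sink

definition G_verts :: "nat \<Rightarrow> nat \<Rightarrow> gvert set" where
  "G_verts n m = {Node i j | i j. 1 \<le> i \<and> i \<le> n \<and> j \<le> m} \<union> {Sink}"

definition G_edges :: "nat \<Rightarrow> nat \<Rightarrow> (gvert \<times> gvert) set" where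
  "G_edges n m =
     {(Node i j, Node i (Suc j)) | i j. 1 \<le> i \<and> i \<le> n \<and> j < m}
   \<union> {(Node i j, Node (Suc i) j) | i j. 1 \<le> i \<and> i < n \<and> j \<le> m}
   \<union> {(Node n j, Sink) | j. j \<le> m}"

definition G_netflow :: "(nat \<Rightarrow> nat) \<Rightarrow> (nat \<Rightarrow> nat) \<Rightarrow> nat \<Rightarrow> nat \<Rightarrow> gvert \<Rightarrow> real" where
  "G_netflow a b n m v = (case v of
      Node i j \<Rightarrow> (if j = 0 then real (a i) else 0) - (if j = m then real (b i) else 0)
    | Sink \<Rightarrow> - (\<Sum>i = 1..n. real (a i)) + (\<Sum>i = 1..n. real (b i)))"

definition flow_polytope :: "(nat \<Rightarrow> nat) \<Rightarrow> (nat \<Rightarrow> nat) \<Rightarrow> nat \<Rightarrow> nat \<Rightarrow> (gvert \<times> gvert \<Rightarrow> real) set" where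
  "flow_polytope a b n m =
     {f. (\<forall>e. e \<notin> G_edges n m \<longrightarrow> f e = 0)
       \<and> (\<forall>e \<in> G_edges n m. 0 \<le> f e)
       \<and> (\<forall>v \<in> G_verts n m.
            (\<Sum>e \<in> {e \<in> G_edges n m. fst e = v}. f e) - (\<Sum>e \<in> {e \<in> G_edges n m. snd e = v}. f e)
              = G_netflow a b n m v)}"

definition integer_flows :: "(nat \<Rightarrow> nat) \<Rightarrow> (nat \<Rightarrow> nat) \<Rightarrow> nat \<Rightarrow> nat \<Rightarrow> (gvert \<times> gvert \<Rightarrow> real) set" where
  "integer_flows a b n m = {f \<in> flow_polytope a b n m. \<forall>e. f e \<in> \<int>}"

end

theory Submission imports Defs begin

definition dn :: "nat \<Rightarrow> nat \<Rightarrow> nat \<Rightarrow> gvert" where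
  "dn n i j = (if i < n then Node (Suc i) j else Sink)"

lemma out_edges:
  assumes "1 \<le> i" "i \<le> n" "j \<le> m"
  shows "{e \<in> G_edges n m. fst e = Node i j} =
     (if j < m then {(Node i j, Node i (Suc j))} else {}) \<union> {(Node i j, dn n i j)}"
  using assms by (auto simp: G_edges_def dn_def)

lemma in_edges:
  assumes "1 \<le> i" "i \<le> n" "j \<le> m"
  shows "{e \<in> G_edges n m. snd e = Node i j} =
     (if 0 < j then {(Node i (j - 1), Node i j)} else {}) \<union> (if 1 < i then {(Node (i - 1) j, Node i j)} else {})"
  using assms by (auto simp: G_edges_def)

lemma out_sum:
  assumes "1 \<le> i" "i \<le> n" "j \<le> m"
  shows "(\<Sum>e \<in> {e \<in> G_edges n m. fst e = Node i j}. f e) =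
     (if j < m then f (Node i j, Node i (Suc j)) else 0) + f (Node i j, dn n i j)"
  unfolding out_edges[OF assms]
  by (cases "j < m") (auto simp: dn_def add_ac)

lemma in_sum:
  assumes "1 \<le> i" "i \<le> n" "j \<le> m"
  shows "(\<Sum>e \<in> {e \<in> G_edges n m. snd e = Node i j}. f e) =
     (if 0 < j then f (Node i (j - 1), Node i j) else 0) + (if 1 < i then f (Node (i - 1) j, Node i j) else 0)"
  unfolding in_edges[OF assms]
  by (cases "0 < j"; cases "1 < i") (auto simp: add_ac)

lemma sink_out: "{e \<in> G_edges n m. fst e = Sink} = {}"
  by (auto simp: G_edges_def)

lemma sink_in: "{e \<in> G_edges n m. snd e = Sink} = (\<lambda>j. (Node n j, Sink)) ` {..m}"
  by (auto simp: G_edges_def)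

lemma sink_in_sum: "(\<Sum>e \<in> {e \<in> G_edges n m. snd e = Sink}. f e) = (\<Sum>j\<le>m. f (Node n j, Sink))"
  unfolding sink_in by (subst sum.reindex) (auto simp: inj_on_def)

lemma notedge_right0: "(Node i m, Node i (Suc m)) \<notin> G_edges n m"
  by (auto simp: G_edges_def)
lemma notedge_up0: "(Node 0 j, Node (Suc 0) j) \<notin> G_edges n m"
  by (auto simp: G_edges_def)
lemma notedge_left0: "(Node i 0, Node i 0) \<notin> G_edges n m"
  by (auto simp: G_edges_def)


definition ps :: "(nat \<Rightarrow> nat) \<Rightarrow> nat \<Rightarrow> nat" where
  "ps a i = (\<Sum>k = 1..i. a k)"

lemma ps_Suc: "ps a (Suc i) = ps a i + a (Suc i)"
  by (simp add: ps_def)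

lemma ps_mono: "i \<le> i' \<Longrightarrow> ps a i \<le> ps a i'"
  unfolding ps_def by (rule sum_mono2) auto

lemma ps_minus1: "1 \<le> i \<Longrightarrow> ps a i = ps a (i - 1) + a i"
  using ps_Suc[of a "i - 1"] by simp

lemma cell_iff: "((r, c) \<in> skew_cells a b n) = (1 \<le> r \<and> r \<le> n \<and> ps b (n + 1 - r) < c \<and> c \<le> ps a (n + 1 - r))"
  by (simp add: skew_cells_def shape_part_def ps_def)

lemma cell_row: "1 \<le> i \<Longrightarrow> i \<le> n \<Longrightarrow> ((Suc n - i, c) \<in> skew_cells a b n) = (ps b i < c \<and> c \<le> ps a i)"
proof -
  assume "1 \<le> i" "i \<le> n"
  then have "1 \<le> Suc n - i" "Suc n - i \<le> n" "Suc n - (Suc n - i) = i" by arith+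
  then show ?thesis by (simp add: cell_iff)
qed

definition rowC :: "(nat \<Rightarrow> nat) \<Rightarrow> (nat \<Rightarrow> nat) \<Rightarrow> nat \<Rightarrow> (nat \<times> nat \<Rightarrow> nat) \<Rightarrow> nat \<Rightarrow> nat \<Rightarrow> nat" where
  "rowC a b n P i j = card {c. (Suc n - i, c) \<in> skew_cells a b n \<and> P (Suc n - i, c) \<le> j}"

lemma rowC_0: "rowC a b n P 0 j = 0"
  by (simp add: rowC_def cell_iff)

lemma rowC_fin: "finite {c. (r, c) \<in> skew_cells a b n \<and> Q c}"
  by (rule finite_subset[of _ "{..ps a (n + 1 - r)}"]) (auto simp: cell_iff)

lemma rowC_mono: "j \<le> j' \<Longrightarrow> rowC a b n P i j \<le> rowC a b n P i j'"
  unfolding rowC_def by (rule card_mono[OF rowC_fin]) auto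

lemma rowC_top:
  assumes "\<forall>c \<in> skew_cells a b n. P c \<le> m" "m \<le> j" "i \<le> n" "ps b i \<le> ps a i"
  shows "real (rowC a b n P i j) = real (ps a i) - real (ps b i)"
proof (cases "i = 0")
  case True then show ?thesis by (simp add: rowC_0 ps_def)
next
  case False
  then have i1: "1 \<le> i" by simp
  have "{c. (Suc n - i, c) \<in> skew_cells a b n \<and> P (Suc n - i, c) \<le> j} = {ps b i<..ps a i}"
  proof (intro set_eqI iffI)
    fix c assume "c \<in> {ps b i<..ps a i}"
    then have c: "(Suc n - i, c) \<in> skew_cells a b n" using cell_row[OF i1 assms(3)] by simp
    then have "P (Suc n - i, c) \<le> m" using assms(1) by blast
    then show "c \<in> {c. (Suc n - i, c) \<in> skew_cells a b n \<and> P (Suc n - i, c) \<le> j}"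
      using c assms(2) by simp
  qed (use cell_row[OF i1 assms(3)] in simp)
  then show ?thesis using assms by (simp add: rowC_def of_nat_diff)
qed

lemma rowC_step:
  assumes P: "P \<in> plane_partitions_bounded a b n m" and i: "1 \<le> i" "i \<le> n"
  shows "rowC a b n P i j \<le> a i + rowC a b n P (i - 1) j"
proof -
  define r where "r = Suc n - i"
  have r1: "Suc n - (i - 1) = Suc r" using i by (simp add: r_def)
  let ?S = "{c. (r, c) \<in> skew_cells a b n \<and> P (r, c) \<le> j}"
  let ?T = "{c. (Suc r, c) \<in> skew_cells a b n \<and> P (Suc r, c) \<le> j}"
  have col: "\<And>r c. (r, c) \<in> skew_cells a b n \<Longrightarrow> (Suc r, c) \<in> skew_cells a b n \<Longrightarrow> P (Suc r, c) \<le> P (r, c)"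
    using P by (simp add: plane_partitions_bounded_def)
  have cr: "(r, c) \<in> skew_cells a b n \<longleftrightarrow> ps b i < c \<and> c \<le> ps a i" for c
    unfolding r_def by (rule cell_row[OF i])
  have sub: "?S \<subseteq> {ps a (i - 1)<..ps a i} \<union> ?T"
  proof
    fix c assume c: "c \<in> ?S"
    show "c \<in> {ps a (i - 1)<..ps a i} \<union> ?T"
    proof (cases "ps a (i - 1) < c")
      case True then show ?thesis using c cr by auto
    next
      case False
      have "i \<noteq> 1"
      proof
        assume "i = 1"
        then have "ps a (i - 1) = 0" by (simp add: ps_def)
        moreover have "ps b i < c" using c cr by simp
        ultimately show False using False by simp
      qed
      then have i2: "1 \<le> i - 1" "i - 1 \<le> n" using i by auto
      have cr2: "(Suc r, c) \<in> skew_cells a b n \<longleftrightarrow> ps b (i - 1) < c \<and> c \<le> ps a (i - 1)"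
        using cell_row[OF i2, of c a b] unfolding r1 .
      have c1: "(r, c) \<in> skew_cells a b n" using c by simp
      have "ps b (i - 1) \<le> ps b i" by (rule ps_mono) simp
      then have c2: "(Suc r, c) \<in> skew_cells a b n"
        using c1 False cr cr2 by auto
      have "P (Suc r, c) \<le> P (r, c)"
        using col[OF c1 c2] by simp
      then show ?thesis using c c2 by auto
    qed
  qed
  have "card ?S \<le> card ({ps a (i - 1)<..ps a i} \<union> ?T)"
    by (rule card_mono[OF _ sub]) (simp add: rowC_fin)
  also have "\<dots> \<le> card {ps a (i - 1)<..ps a i} + card ?T" by (rule card_Un_le)
  also have "card {ps a (i - 1)<..ps a i} = a i" using ps_minus1[OF i(1), of a] by simp
  finally show ?thesis unfolding rowC_def r1 r_def[symmetric] by simp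
qed


definition Dp :: "(nat \<Rightarrow> nat) \<Rightarrow> (nat \<Rightarrow> nat) \<Rightarrow> nat \<Rightarrow> (nat \<times> nat \<Rightarrow> nat) \<Rightarrow> nat \<Rightarrow> nat \<Rightarrow> real" where
  "Dp a b n P i j = real (rowC a b n P i j) - (if j = 0 then 0 else real (rowC a b n P i (j - 1)))"

definition Rp :: "(nat \<Rightarrow> nat) \<Rightarrow> (nat \<Rightarrow> nat) \<Rightarrow> nat \<Rightarrow> (nat \<times> nat \<Rightarrow> nat) \<Rightarrow> nat \<Rightarrow> nat \<Rightarrow> real" where
  "Rp a b n P i j = real (a i) + real (rowC a b n P (i - 1) j) - real (rowC a b n P i j)"

definition phi :: "(nat \<Rightarrow> nat) \<Rightarrow> (nat \<Rightarrow> nat) \<Rightarrow> nat \<Rightarrow> nat \<Rightarrow> (nat \<times> nat \<Rightarrow> nat) \<Rightarrow> gvert \<times> gvert \<Rightarrow> real" where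
  "phi a b n m P e = (if e \<in> G_edges n m then
     (case e of (Node i j, Node i' j') \<Rightarrow> if i' = i then Rp a b n P i j else Dp a b n P i j
       | (Node i j, Sink) \<Rightarrow> Dp a b n P i j
       | _ \<Rightarrow> 0) else 0)"

lemma phi_off: "e \<notin> G_edges n m \<Longrightarrow> phi a b n m P e = 0"
  by (simp add: phi_def)

lemma right_edge: "1 \<le> i \<Longrightarrow> i \<le> n \<Longrightarrow> j < m \<Longrightarrow> (Node i j, Node i (Suc j)) \<in> G_edges n m"
  by (auto simp: G_edges_def)

lemma dn_edge: "1 \<le> i \<Longrightarrow> i \<le> n \<Longrightarrow> j \<le> m \<Longrightarrow> (Node i j, dn n i j) \<in> G_edges n m"
  by (auto simp: G_edges_def dn_def)

lemma phi_right: "1 \<le> i \<Longrightarrow> i \<le> n \<Longrightarrow> j < m \<Longrightarrow> phi a b n m P (Node i j, Node i (Suc j)) = Rp a b n P i j"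
  using right_edge[of i n j m] by (simp add: phi_def)

lemma phi_dn: "1 \<le> i \<Longrightarrow> i \<le> n \<Longrightarrow> j \<le> m \<Longrightarrow> phi a b n m P (Node i j, dn n i j) = Dp a b n P i j"
  using dn_edge[of i n j m] by (simp add: phi_def dn_def)

lemma Dp_sum: "(\<Sum>j\<le>k. Dp a b n P i j) = real (rowC a b n P i k)"
  by (induction k) (auto simp: Dp_def)

lemma Dp_0: "Dp a b n P 0 j = 0"
  by (simp add: Dp_def rowC_0)

lemma phi_in:
  assumes n0: "0 < n" and m0: "0 < m" and dom: "\<forall>i \<in> {1..n}. ps b i \<le> ps a i"
    and P: "P \<in> plane_partitions_bounded a b n m"
  shows "phi a b n m P \<in> integer_flows a b n m"
proof -
  have Pm: "\<forall>c \<in> skew_cells a b n. P c \<le> m" using P by (simp add: plane_partitions_bounded_def)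
  have dom': "ps b i \<le> ps a i" if "i \<le> n" for i
    using dom that by (cases "i = 0") (auto simp: ps_def)
  have top: "real (rowC a b n P i m) = real (ps a i) - real (ps b i)" if "i \<le> n" for i
    using rowC_top[OF Pm order_refl that dom'[OF that]] .
  have Rnn: "0 \<le> Rp a b n P i j" if "1 \<le> i" "i \<le> n" for i j
    using rowC_step[OF P that, of j] by (simp add: Rp_def)
  have Dnn: "0 \<le> Dp a b n P i j" for i j
    using rowC_mono[of "j - 1" j a b n P i] by (simp add: Dp_def)
  have nonneg: "\<forall>e \<in> G_edges n m. 0 \<le> phi a b n m P e"
  proof
    fix e assume e: "e \<in> G_edges n m"
    then show "0 \<le> phi a b n m P e"
      unfolding G_edges_def using Rnn Dnn by (auto simp: phi_def)
  qed
  have ints: "\<forall>e. phi a b n m P e \<in> \<int>"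
  proof
    fix e
    have "Rp a b n P i j \<in> \<int>" "Dp a b n P i j \<in> \<int>" for i j
      by (auto simp: Rp_def Dp_def)
    then show "phi a b n m P e \<in> \<int>"
      by (auto simp: phi_def split: prod.split gvert.split)
  qed
  have cons: "(\<Sum>e \<in> {e \<in> G_edges n m. fst e = v}. phi a b n m P e)
      - (\<Sum>e \<in> {e \<in> G_edges n m. snd e = v}. phi a b n m P e) = G_netflow a b n m v"
    if v: "v \<in> G_verts n m" for v
  proof (cases v)
    case Sink
    have "(\<Sum>e \<in> {e \<in> G_edges n m. snd e = v}. phi a b n m P e) = (\<Sum>j\<le>m. Dp a b n P n j)"
      unfolding Sink sink_in_sum
    proof (rule sum.cong)
      fix j assume "j \<in> {..m}"
      then show "phi a b n m P (Node n j, Sink) = Dp a b n P n j"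
        using phi_dn[of n n j m a b P] n0 by (simp add: dn_def)
    qed simp
    also have "\<dots> = real (ps a n) - real (ps b n)" using Dp_sum top[of n] by simp
    finally show ?thesis unfolding Sink sink_out
      by (simp add: G_netflow_def ps_def of_nat_sum)
  next
    case (Node i j)
    then have ij: "1 \<le> i" "i \<le> n" "j \<le> m" using v by (auto simp: G_verts_def)
    have o1: "(if j < m then phi a b n m P (Node i j, Node i (Suc j)) else 0) = (if j < m then Rp a b n P i j else 0)"
      using phi_right[OF ij(1,2)] by simp
    have o2: "phi a b n m P (Node i j, dn n i j) = Dp a b n P i j" using phi_dn[OF ij] .
    have i1: "(if 0 < j then phi a b n m P (Node i (j - 1), Node i j) else 0) = (if 0 < j then Rp a b n P i (j - 1) else 0)"
      using phi_right[OF ij(1,2), of "j - 1"] ij by auto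
    have i2: "(if 1 < i then phi a b n m P (Node (i - 1) j, Node i j) else 0) = Dp a b n P (i - 1) j"
    proof (cases "1 < i")
      case True
      then have "dn n (i - 1) j = Node i j" using ij by (simp add: dn_def)
      then show ?thesis using phi_dn[of "i - 1" n j m a b P] True ij by simp
    next
      case False
      then show ?thesis using ij by (simp add: Dp_0)
    qed
    have net: "G_netflow a b n m v = (if j = 0 then real (a i) else 0) - (if j = m then real (b i) else 0)"
      by (simp add: G_netflow_def Node)
    have key: "(if j < m then Rp a b n P i j else 0) + Dp a b n P i j
       - ((if 0 < j then Rp a b n P i (j - 1) else 0) + Dp a b n P (i - 1) j)
       = (if j = 0 then real (a i) else 0) - (if j = m then real (b i) else 0)"
    proof (cases "j = m")
      case True
      then have "j \<noteq> 0" using m0 by simp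
      moreover have "real (ps a i) = real (ps a (i - 1)) + real (a i)" "real (ps b i) = real (ps b (i - 1)) + real (b i)"
        using ps_minus1[OF ij(1)] by simp_all
      ultimately show ?thesis using True top[of i] top[of "i - 1"] ij
        by (simp add: Rp_def Dp_def)
    next
      case False
      then show ?thesis using ij by (auto simp: Rp_def Dp_def)
    qed
    show ?thesis
      unfolding Node out_sum[OF ij] in_sum[OF ij] o1 o2 i1 i2 net[unfolded Node] key[symmetric] by simp
  qed
  show ?thesis
    unfolding integer_flows_def flow_polytope_def
    using phi_off nonneg ints cons by auto
qed


lemma edge_cases:
  assumes e: "e \<in> G_edges n m" and n0: "0 < n"
  obtains (R) i j where "e = (Node i j, Node i (Suc j))" "1 \<le> i" "i \<le> n" "j < m"
    | (D) i j where "e = (Node i j, dn n i j)" "1 \<le> i" "i \<le> n" "j \<le> m"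
proof -
  have "(e \<in> {(Node i j, Node i (Suc j)) | i j. 1 \<le> i \<and> i \<le> n \<and> j < m}
    \<or> e \<in> {(Node i j, Node (Suc i) j) | i j. 1 \<le> i \<and> i < n \<and> j \<le> m})
    \<or> e \<in> {(Node n j, Sink) | j. j \<le> m}"
    using e unfolding G_edges_def Un_iff .
  then show thesis
  proof (elim disjE)
    assume a: "e \<in> {(Node i j, Node i (Suc j)) | i j. 1 \<le> i \<and> i \<le> n \<and> j < m}"
    then obtain i j where "e = (Node i j, Node i (Suc j))" "1 \<le> i" "i \<le> n" "j < m" by (auto simp only: mem_Collect_eq)
    then show thesis by (rule R)
  next
    assume b: "e \<in> {(Node i j, Node (Suc i) j) | i j. 1 \<le> i \<and> i < n \<and> j \<le> m}"
    then obtain i j where h: "e = (Node i j, Node (Suc i) j)" "1 \<le> i" "i < n" "j \<le> m" by blast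
    then have "e = (Node i j, dn n i j)" by (simp add: dn_def)
    then show thesis using h(2,3,4) D by simp
  next
    assume c: "e \<in> {(Node n j, Sink) | j. j \<le> m}"
    then obtain j where h: "e = (Node n j, Sink)" "j \<le> m" by blast
    then have "e = (Node n j, dn n n j)" by (simp add: dn_def)
    moreover have "1 \<le> n" using n0 by simp
    ultimately show thesis using h(2) D by simp
  qed
qed

definition Qf :: "nat \<Rightarrow> (gvert \<times> gvert \<Rightarrow> real) \<Rightarrow> nat \<Rightarrow> nat \<Rightarrow> real" where
  "Qf n f i j = (\<Sum>k\<le>j. f (Node i k, dn n i k))"

definition psi :: "(nat \<Rightarrow> nat) \<Rightarrow> (nat \<Rightarrow> nat) \<Rightarrow> nat \<Rightarrow> nat \<Rightarrow> (gvert \<times> gvert \<Rightarrow> real) \<Rightarrow> nat \<times> nat \<Rightarrow> nat" where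
  "psi a b n m f rc = (case rc of (r, c) \<Rightarrow> if (r, c) \<in> skew_cells a b n then
     card {t \<in> {1..m}. real c + Qf n f (Suc n - r) (t - 1) \<le> real (ps a (Suc n - r))} else 0)"

lemma Qf_Suc: "Qf n f i (Suc j) = Qf n f i j + f (Node i (Suc j), dn n i (Suc j))"
  by (simp add: Qf_def)

lemma Qf_0: "Qf n f i 0 = f (Node i 0, dn n i 0)"
  by (simp add: Qf_def)

lemma cons_node:
  assumes f: "f \<in> flow_polytope a b n m" and n0: "0 < n" and ij: "1 \<le> i" "i \<le> n" "j \<le> m"
  shows "(if j < m then f (Node i j, Node i (Suc j)) else 0) + f (Node i j, dn n i j)
     - (if 0 < j then f (Node i (j - 1), Node i j) else 0) - f (Node (i - 1) j, dn n (i - 1) j)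
     = (if j = 0 then real (a i) else 0) - (if j = m then real (b i) else 0)"
proof -
  have off: "\<And>e. e \<notin> G_edges n m \<Longrightarrow> f e = 0" using f unfolding flow_polytope_def by blast
  have v: "Node i j \<in> G_verts n m" using ij by (auto simp: G_verts_def)
  have c: "(\<Sum>e \<in> {e \<in> G_edges n m. fst e = Node i j}. f e) - (\<Sum>e \<in> {e \<in> G_edges n m. snd e = Node i j}. f e)
      = G_netflow a b n m (Node i j)"
    using f v by (simp add: flow_polytope_def)
  have up: "(if 1 < i then f (Node (i - 1) j, Node i j) else 0) = f (Node (i - 1) j, dn n (i - 1) j)"
  proof (cases "1 < i")
    case True
    then have "i - 1 < n" "Suc (i - 1) = i" using ij by auto
    then have "dn n (i - 1) j = Node i j" by (simp add: dn_def)
    then show ?thesis using True by simp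
  next
    case False
    then have "i = 1" using ij by simp
    then show ?thesis using off[of "(Node 0 j, dn n 0 j)"] n0 by (simp add: dn_def G_edges_def)
  qed
  show ?thesis using c unfolding out_sum[OF ij] in_sum[OF ij] up by (simp add: G_netflow_def)
qed

context
  fixes n m :: nat and a b :: "nat \<Rightarrow> nat" and f
  assumes n0: "0 < n" and m0: "0 < m" and f: "f \<in> integer_flows a b n m"
begin

lemma fp: "f \<in> flow_polytope a b n m" using f by (simp add: integer_flows_def)

lemma f_off: "e \<notin> G_edges n m \<Longrightarrow> f e = 0" using fp unfolding flow_polytope_def by blast

lemma f_nn: "0 \<le> f e"
  using fp f_off[of e] by (cases "e \<in> G_edges n m") (auto simp: flow_polytope_def)

lemma f_int: "f e \<in> \<int>" using f unfolding integer_flows_def by blast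

lemma Qf_zero: "Qf n f 0 j = 0"
  unfolding Qf_def by (rule sum.neutral) (use n0 in \<open>auto intro!: f_off simp: dn_def G_edges_def\<close>)

lemma Qf_right:
  assumes "1 \<le> i" "i \<le> n" "j < m"
  shows "f (Node i j, Node i (Suc j)) = real (a i) + Qf n f (i - 1) j - Qf n f i j"
  using assms(3)
proof (induction j)
  case 0
  show ?case using cons_node[OF fp n0 assms(1,2), of 0] 0 by (simp add: Qf_0)
next
  case (Suc j)
  have "f (Node i j, Node i (Suc j)) = real (a i) + Qf n f (i - 1) j - Qf n f i j"
    using Suc by simp
  then show ?case using cons_node[OF fp n0 assms(1,2), of "Suc j"] Suc.prems
    by (simp add: Qf_Suc)
qed

lemma Qf_top: "i \<le> n \<Longrightarrow> Qf n f i m = real (ps a i) - real (ps b i)"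
proof (induction i)
  case 0
  then show ?case by (simp add: Qf_zero ps_def)
next
  case (Suc i)
  have m1: "Suc (m - 1) = m" using m0 by simp
  have c: "f (Node (Suc i) m, dn n (Suc i) m) - f (Node (Suc i) (m - 1), Node (Suc i) m) - f (Node i m, dn n i m)
      = - real (b (Suc i))"
    using cons_node[OF fp n0 _ Suc.prems, of m] m0 by simp
  have r: "f (Node (Suc i) (m - 1), Node (Suc i) m) = real (a (Suc i)) + Qf n f i (m - 1) - Qf n f (Suc i) (m - 1)"
    using Qf_right[of "Suc i" "m - 1"] Suc.prems m0 m1 by simp
  have q1: "Qf n f (Suc i) m = Qf n f (Suc i) (m - 1) + f (Node (Suc i) m, dn n (Suc i) m)"
    using Qf_Suc[of n f "Suc i" "m - 1"] m1 by simp
  have q2: "Qf n f i m = Qf n f i (m - 1) + f (Node i m, dn n i m)"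
    using Qf_Suc[of n f i "m - 1"] m1 by simp
  show ?case using c r q1 q2 Suc.IH Suc.prems by (simp add: ps_Suc)
qed

lemma Qf_mono: "j \<le> j' \<Longrightarrow> Qf n f i j \<le> Qf n f i j'"
  unfolding Qf_def by (rule sum_mono2) (auto intro: f_nn)

lemma Qf_nn: "0 \<le> Qf n f i j"
  unfolding Qf_def by (rule sum_nonneg) (auto intro: f_nn)

lemma Qf_int: "Qf n f i j \<in> \<int>"
  unfolding Qf_def by (rule Ints_sum) (auto intro: f_int)

lemma Qf_nat: "\<exists>q. Qf n f i j = real q"
proof -
  obtain z where z: "Qf n f i j = of_int z" using Qf_int Ints_cases by blast
  then have "0 \<le> z" using Qf_nn[of i j] by simp
  then show ?thesis using z by (intro exI[of _ "nat z"]) simp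
qed

lemma Qf_step: "1 \<le> i \<Longrightarrow> i \<le> n \<Longrightarrow> j < m \<Longrightarrow> Qf n f i j \<le> real (a i) + Qf n f (i - 1) j"
  using Qf_right[of i j] f_nn[of "(Node i j, Node i (Suc j))"] by simp

end


lemma psi_rc: "psi a b n m f (r, c) = (if (r, c) \<in> skew_cells a b n then
     card {t \<in> {1..m}. real c + Qf n f (Suc n - r) (t - 1) \<le> real (ps a (Suc n - r))} else 0)"
  by (simp add: psi_def)

lemma psi_in:
  assumes n0: "0 < n" and m0: "0 < m" and f: "f \<in> integer_flows a b n m"
  shows "psi a b n m f \<in> plane_partitions_bounded a b n m"
proof -
  let ?P = "psi a b n m f"
  have A: "\<forall>c. c \<notin> skew_cells a b n \<longrightarrow> ?P c = 0"
    by (auto simp: psi_def)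
  have B: "\<forall>c \<in> skew_cells a b n. ?P c \<le> m"
  proof
    fix c assume "c \<in> skew_cells a b n"
    obtain r x where c: "c = (r, x)" by fastforce
    have gen: "card {t \<in> {1..m::nat}. Q t} \<le> m" for Q
    proof -
      have "card {t \<in> {1..m::nat}. Q t} \<le> card {1..m}" by (rule card_mono) auto
      then show ?thesis by simp
    qed
    show "?P c \<le> m" unfolding c psi_rc
      by (cases "(r, x) \<in> skew_cells a b n") (simp_all only: if_True if_False gen le0)
  qed
  have C: "?P (r, Suc j) \<le> ?P (r, j)" if "(r, j) \<in> skew_cells a b n" "(r, Suc j) \<in> skew_cells a b n" for r j
    unfolding psi_rc using that by (auto intro!: card_mono)
  have D: "?P (Suc r, j) \<le> ?P (r, j)" if rj: "(r, j) \<in> skew_cells a b n" "(Suc r, j) \<in> skew_cells a b n" for r j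
  proof -
    define i where "i = Suc n - r"
    have r: "1 \<le> r" "Suc r \<le> n" using rj by (auto simp: cell_iff)
    then have i: "1 \<le> i" "i \<le> n" "Suc n - Suc r = i - 1" "1 \<le> i - 1" by (auto simp: i_def)
    have sub: "{t \<in> {1..m}. real j + Qf n f (i - 1) (t - 1) \<le> real (ps a (i - 1))}
       \<subseteq> {t \<in> {1..m}. real j + Qf n f i (t - 1) \<le> real (ps a i)}"
    proof
      fix t assume t: "t \<in> {t \<in> {1..m}. real j + Qf n f (i - 1) (t - 1) \<le> real (ps a (i - 1))}"
      have "Qf n f i (t - 1) \<le> real (a i) + Qf n f (i - 1) (t - 1)"
        using Qf_step[OF n0 m0 f i(1,2), of "t - 1"] t by auto
      moreover have "real (ps a i) = real (ps a (i - 1)) + real (a i)" using ps_minus1[OF i(1)] by simp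
      ultimately show "t \<in> {t \<in> {1..m}. real j + Qf n f i (t - 1) \<le> real (ps a i)}" using t by auto
    qed
    show ?thesis unfolding psi_rc using rj i sub
      by (simp add: i_def[symmetric] card_mono)
  qed
  show ?thesis unfolding plane_partitions_bounded_def using A B C D by blast
qed

lemma row_mono:
  assumes P: "P \<in> plane_partitions_bounded a b n m"
    and c: "(r, c) \<in> skew_cells a b n" "(r, c + d) \<in> skew_cells a b n"
  shows "P (r, c + d) \<le> P (r, c)"
  using c(2)
proof (induction d)
  case 0 then show ?case by simp
next
  case (Suc d)
  have cd: "(r, c + d) \<in> skew_cells a b n" using c Suc.prems by (auto simp: cell_iff)
  have "P (r, Suc (c + d)) \<le> P (r, c + d)"
    using P cd Suc.prems unfolding plane_partitions_bounded_def by simp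
  then show ?case using Suc.IH[OF cd] by simp
qed

lemma card_prefix: "k \<le> m \<Longrightarrow> card {t \<in> {1..m::nat}. t \<le> k} = k"
proof -
  assume "k \<le> m"
  then have "{t \<in> {1..m::nat}. t \<le> k} = {1..k}" by auto
  then show ?thesis by simp
qed

lemma card_dc:
  assumes dc: "\<And>t t'. 1 \<le> t' \<Longrightarrow> t' \<le> t \<Longrightarrow> g t \<Longrightarrow> g t'"
  shows "card {t \<in> {1..m::nat}. g t} \<le> j \<longleftrightarrow> (m \<le> j \<or> \<not> g (Suc j))"
proof
  assume h: "card {t \<in> {1..m::nat}. g t} \<le> j"
  show "m \<le> j \<or> \<not> g (Suc j)"
  proof (rule ccontr)
    assume "\<not> (m \<le> j \<or> \<not> g (Suc j))"
    then have "j < m" "g (Suc j)" by auto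
    then have "{1..Suc j} \<subseteq> {t \<in> {1..m::nat}. g t}" using dc by auto
    then have "card {1..Suc j} \<le> card {t \<in> {1..m::nat}. g t}" by (intro card_mono) auto
    then show False using h by simp
  qed
next
  assume h: "m \<le> j \<or> \<not> g (Suc j)"
  show "card {t \<in> {1..m::nat}. g t} \<le> j"
  proof (cases "m \<le> j")
    case True
    have "card {t \<in> {1..m::nat}. g t} \<le> card {1..m}" by (intro card_mono) auto
    then show ?thesis using True by simp
  next
    case False
    then have ng: "\<not> g (Suc j)" using h by simp
    have "{t \<in> {1..m::nat}. g t} \<subseteq> {1..j}"
    proof
      fix t assume t: "t \<in> {t \<in> {1..m::nat}. g t}"
      have "t \<le> j"
      proof (rule ccontr)
        assume "\<not> t \<le> j"
        then show False using dc[of "Suc j" t] t ng by auto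
      qed
      then show "t \<in> {1..j}" using t by simp
    qed
    then have "card {t \<in> {1..m::nat}. g t} \<le> card {1..j}" by (intro card_mono) auto
    then show ?thesis by simp
  qed
qed


lemma Qf_phi:
  assumes "1 \<le> i" "i \<le> n" "j \<le> m"
  shows "Qf n (phi a b n m P) i j = real (rowC a b n P i j)"
proof -
  have "Qf n (phi a b n m P) i j = (\<Sum>k\<le>j. Dp a b n P i k)"
    unfolding Qf_def by (rule sum.cong) (use assms in \<open>auto intro!: phi_dn\<close>)
  then show ?thesis using Dp_sum by simp
qed

lemma psi_phi:
  assumes n0: "0 < n" and m0: "0 < m" and P: "P \<in> plane_partitions_bounded a b n m"
  shows "psi a b n m (phi a b n m P) = P"
proof
  fix rc :: "nat \<times> nat"
  obtain r c where rc: "rc = (r, c)" by fastforce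
  show "psi a b n m (phi a b n m P) rc = P rc"
  proof (cases "(r, c) \<in> skew_cells a b n")
    case False
    then show ?thesis using P unfolding rc psi_rc plane_partitions_bounded_def by auto
  next
    case True
    define i where "i = Suc n - r"
    have r: "1 \<le> r" "r \<le> n" using True by (auto simp: cell_iff)
    then have i: "1 \<le> i" "i \<le> n" "Suc n - i = r" by (auto simp: i_def)
    have cr: "(r, c') \<in> skew_cells a b n \<longleftrightarrow> ps b i < c' \<and> c' \<le> ps a i" for c'
      unfolding i(3)[symmetric] by (rule cell_row[OF i(1,2)])
    have Pm: "P (r, c) \<le> m" using P True by (auto simp: plane_partitions_bounded_def)
    have key: "real c + real (rowC a b n P i (t - 1)) \<le> real (ps a i) \<longleftrightarrow> t \<le> P (r, c)"
      if t: "1 \<le> t" for t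
    proof -
      let ?S = "{c'. (r, c') \<in> skew_cells a b n \<and> P (r, c') \<le> t - 1}"
      have rC: "rowC a b n P i (t - 1) = card ?S" unfolding rowC_def i(3) ..
      show ?thesis
      proof
        assume h: "real c + real (rowC a b n P i (t - 1)) \<le> real (ps a i)"
        show "t \<le> P (r, c)"
        proof (rule ccontr)
          assume "\<not> t \<le> P (r, c)"
          then have lt: "P (r, c) \<le> t - 1" by simp
          have "{c..ps a i} \<subseteq> ?S"
          proof
            fix c' assume c': "c' \<in> {c..ps a i}"
            then have cc: "(r, c') \<in> skew_cells a b n" using cr True by auto
            have "P (r, c + (c' - c)) \<le> P (r, c)"
              by (rule row_mono[OF P True]) (use cc c' in simp)
            then show "c' \<in> ?S" using cc c' lt by simp
          qed
          then have "card {c..ps a i} \<le> card ?S" by (intro card_mono rowC_fin)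
          then have "Suc (ps a i) - c \<le> rowC a b n P i (t - 1)" unfolding rC by simp
          moreover have "c \<le> ps a i" using cr True by simp
          ultimately show False using h by linarith
        qed
      next
        assume h: "t \<le> P (r, c)"
        have "?S \<subseteq> {c<..ps a i}"
        proof
          fix c' assume c': "c' \<in> ?S"
          have "c < c'"
          proof (rule ccontr)
            assume "\<not> c < c'"
            then have "P (r, c' + (c - c')) \<le> P (r, c')"
              by (intro row_mono[OF P]) (use c' True in auto)
            moreover have "c' + (c - c') = c" using \<open>\<not> c < c'\<close> by simp
            ultimately have "P (r, c) \<le> P (r, c')" by simp
            moreover have "P (r, c') \<le> t - 1" using c' by simp
            ultimately show False using h t by linarith
          qed
          then show "c' \<in> {c<..ps a i}" using c' cr by auto
        qed
        then have "card ?S \<le> card {c<..ps a i}" by (intro card_mono) auto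
        then have "rowC a b n P i (t - 1) \<le> ps a i - c" unfolding rC by simp
        moreover have "c \<le> ps a i" using cr True by simp
        ultimately show "real c + real (rowC a b n P i (t - 1)) \<le> real (ps a i)" by linarith
      qed
    qed
    have "{t \<in> {1..m}. real c + Qf n (phi a b n m P) (Suc n - r) (t - 1) \<le> real (ps a (Suc n - r))}
        = {t \<in> {1..m}. t \<le> P (r, c)}"
    proof (rule Collect_cong)
      fix t
      show "(t \<in> {1..m} \<and> real c + Qf n (phi a b n m P) (Suc n - r) (t - 1) \<le> real (ps a (Suc n - r)))
         = (t \<in> {1..m} \<and> t \<le> P (r, c))"
        using key[of t] Qf_phi[OF i(1,2), of "t - 1" m a b P] unfolding i_def[symmetric] by auto
    qed
    then show ?thesis unfolding rc psi_rc using True card_prefix[OF Pm] by simp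
  qed
qed


context
  fixes n m :: nat and a b :: "nat \<Rightarrow> nat" and f
  assumes n0: "0 < n" and m0: "0 < m" and f: "f \<in> integer_flows a b n m"
    and dom: "\<forall>i \<in> {1..n}. ps b i \<le> ps a i"
begin

lemma dom': "i \<le> n \<Longrightarrow> ps b i \<le> ps a i"
  using dom by (cases "i = 0") (auto simp: ps_def)

lemma rowC_psi:
  assumes i: "i \<le> n" and j: "j \<le> m"
  shows "real (rowC a b n (psi a b n m f) i j) = Qf n f i j"
proof (cases "i = 0")
  case True
  then show ?thesis by (simp add: rowC_0 Qf_zero[OF n0 m0 f])
next
  case False
  then have i1: "1 \<le> i" by simp
  have PP: "psi a b n m f \<in> plane_partitions_bounded a b n m" by (rule psi_in[OF n0 m0 f])
  then have Pm: "\<forall>c \<in> skew_cells a b n. psi a b n m f c \<le> m" by (simp add: plane_partitions_bounded_def)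
  show ?thesis
  proof (cases "j = m")
    case True
    then show ?thesis using rowC_top[OF Pm order_refl i dom'[OF i]] Qf_top[OF n0 m0 f i] by simp
  next
    case False
    then have jm: "j < m" using j by simp
    define r where "r = Suc n - i"
    have ri: "Suc n - r = i" using i i1 by (simp add: r_def)
    have cr: "(r, c) \<in> skew_cells a b n \<longleftrightarrow> ps b i < c \<and> c \<le> ps a i" for c
      unfolding r_def by (rule cell_row[OF i1 i])
    obtain q where q: "Qf n f i j = real q" using Qf_nat[OF n0 m0 f] by blast
    have "Qf n f i j \<le> Qf n f i m" using Qf_mono[OF n0 m0 f j] .
    then have qle: "q \<le> ps a i - ps b i" using q Qf_top[OF n0 m0 f i] dom'[OF i] by simp
    have dc: "\<And>t t'. 1 \<le> t' \<Longrightarrow> t' \<le> t \<Longrightarrow> real c + Qf n f i (t - 1) \<le> real (ps a i)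
       \<Longrightarrow> real c + Qf n f i (t' - 1) \<le> real (ps a i)" for c
    proof -
      fix t t' :: nat assume "1 \<le> t'" "t' \<le> t" "real c + Qf n f i (t - 1) \<le> real (ps a i)"
      moreover have "Qf n f i (t' - 1) \<le> Qf n f i (t - 1)" using Qf_mono[OF n0 m0 f] \<open>t' \<le> t\<close> by simp
      ultimately show "real c + Qf n f i (t' - 1) \<le> real (ps a i)" by simp
    qed
    have "{c. (r, c) \<in> skew_cells a b n \<and> psi a b n m f (r, c) \<le> j} = {ps a i - q<..ps a i}"
    proof (rule set_eqI)
      fix c
      have iff: "psi a b n m f (r, c) \<le> j \<longleftrightarrow> \<not> (c + q \<le> ps a i)"
        if cc: "(r, c) \<in> skew_cells a b n"
      proof -
        have e1: "psi a b n m f (r, c) = card {t \<in> {1..m}. real c + Qf n f i (t - 1) \<le> real (ps a i)}"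
          using cc unfolding psi_rc ri by simp
        have e2: "card {t \<in> {1..m}. real c + Qf n f i (t - 1) \<le> real (ps a i)} \<le> j
            \<longleftrightarrow> (m \<le> j \<or> \<not> (real c + Qf n f i (Suc j - 1) \<le> real (ps a i)))"
          by (rule card_dc) (rule dc)
        have e3: "(real c + Qf n f i (Suc j - 1) \<le> real (ps a i)) \<longleftrightarrow> c + q \<le> ps a i"
        proof -
          have "real c + Qf n f i (Suc j - 1) = real (c + q)" using q by simp
          then show ?thesis by (simp only: of_nat_le_iff)
        qed
        show ?thesis unfolding e1 e2 e3 using jm by simp
      qed
      have "ps b i \<le> ps a i - q" using qle dom'[OF i] by linarith
      then show "c \<in> {c. (r, c) \<in> skew_cells a b n \<and> psi a b n m f (r, c) \<le> j} \<longleftrightarrow> c \<in> {ps a i - q<..ps a i}"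
        using cr[of c] iff by auto
    qed
    moreover have "q \<le> ps a i" using qle by linarith
    ultimately show ?thesis unfolding rowC_def r_def[symmetric] using q by (simp add: of_nat_diff)
  qed
qed

lemma Dp_psi:
  assumes "1 \<le> i" "i \<le> n" "j \<le> m"
  shows "Dp a b n (psi a b n m f) i j = f (Node i j, dn n i j)"
proof (cases j)
  case 0
  then show ?thesis using rowC_psi[OF assms(2,3)] by (simp add: Dp_def Qf_0)
next
  case (Suc k)
  then show ?thesis using rowC_psi[OF assms(2,3)] rowC_psi[OF assms(2), of k] assms(3)
    by (simp add: Dp_def Qf_Suc)
qed

lemma phi_psi: "phi a b n m (psi a b n m f) = f"
proof
  fix e
  show "phi a b n m (psi a b n m f) e = f e"
  proof (cases "e \<in> G_edges n m")
    case False
    have "phi a b n m (psi a b n m f) e = 0" by (rule phi_off[OF False])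
    moreover have "f e = 0" by (rule f_off[OF n0 m0 f False])
    ultimately show ?thesis by simp
  next
    case True
    from True n0 show ?thesis
    proof (cases rule: edge_cases)
      case (R i j)
      have "real (rowC a b n (psi a b n m f) (i - 1) j) = Qf n f (i - 1) j"
        using rowC_psi[of "i - 1" j] R by simp
      moreover have "real (rowC a b n (psi a b n m f) i j) = Qf n f i j"
        using rowC_psi[of i j] R by simp
      moreover have "phi a b n m (psi a b n m f) e = Rp a b n (psi a b n m f) i j"
        unfolding R(1) by (rule phi_right) (use R in auto)
      moreover have "f e = real (a i) + Qf n f (i - 1) j - Qf n f i j"
        unfolding R(1) by (rule Qf_right[OF n0 m0 f]) (use R in auto)
      ultimately show ?thesis unfolding Rp_def by simp
    next
      case (D i j)
      have "phi a b n m (psi a b n m f) e = Dp a b n (psi a b n m f) i j"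
        unfolding D(1) by (rule phi_dn) (use D in auto)
      also have "\<dots> = f e" unfolding D(1) by (rule Dp_psi) (use D in auto)
      finally show ?thesis .
    qed
  qed
qed

end

theorem theorem3p7:
  fixes n m :: nat and a b :: "nat \<Rightarrow> nat"
  assumes "0 < n" and "0 < m"
    and "\<forall>i \<in> {1..n}. (\<Sum>k = 1..i. b k) \<le> (\<Sum>k = 1..i. a k)"
  shows "\<exists>\<phi>. bij_betw \<phi> (plane_partitions_bounded a b n m) (integer_flows a b n m)"
proof -
  have dom: "\<forall>i \<in> {1..n}. ps b i \<le> ps a i" using assms(3) by (simp add: ps_def)
  have "bij_betw (phi a b n m) (plane_partitions_bounded a b n m) (integer_flows a b n m)"
  proof (rule bij_betw_byWitness[where f' = "psi a b n m"])
    show "\<forall>P \<in> plane_partitions_bounded a b n m. psi a b n m (phi a b n m P) = P"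
      using psi_phi[OF assms(1,2)] by blast
    show "\<forall>f \<in> integer_flows a b n m. phi a b n m (psi a b n m f) = f"
      using phi_psi[OF assms(1,2) _ dom] by blast
    show "phi a b n m ` plane_partitions_bounded a b n m \<subseteq> integer_flows a b n m"
      using phi_in[OF assms(1,2) dom] by blast
    show "psi a b n m ` integer_flows a b n m \<subseteq> plane_partitions_bounded a b n m"
      using psi_in[OF assms(1,2)] by blast
  qed
  then show ?thesis by blast
qed

end
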